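(* Let $m,n\in\mathbb{N}_0$, let $g\in\mathcal{H}(\mathbb{D})$, let $\mathcal{L}_j\in W_g(m-j,n+j)$ for $j=0,\dots,m$, and let $L_g$ be a $g$-operator satisfying \[L_g=L_0+\sum_{j=1}^mL_j\quad\text{on }\mathcal{H}_0(\mathbb{D}),\] where $L_0\in W_g(m,n)$ and $L_j\in\operatorname{span}W_g(m-j,n+j)$ for $j=1,\dots,m$. Then $L_g=\mathcal{L}_0+\sum_{j=1}^ma_j\mathcal{L}_j$ on $\mathcal{H}_0(\mathbb{D})$, where $a_1,\dots,a_m$ are complex numbers which do not depend on $g$.
   Context: $\mathbb{D}$ is the open unit disc, $\mathcal{H}(\mathbb{D})$ the analytic functions on $\mathbb{D}$, $\mathcal{H}_0(\mathbb{D})=\{f\in\mathcal{H}(\mathbb{D}):f(0)=0\}$, $\mathbb{N}_0=\mathbb{N}\cup\{0\}$. For $g\in\mathcal{H}(\mathbb{D})$: $M_gf=fg$, $S_gf(z)=\int_0^zf'(\zeta)g(\zeta)d\zeta$, $T_gf(z)=\int_0^zf(\zeta)g'(\zeta)d\zeta$. A $g$-operator is a finite linear combination (constant coefficients) of finite compositions of $M_g,S_g,T_g$ (the identity counts as the empty composition). For $a,b\in\mathbb{N}_0$, $W_g(a,b)$ is the set of compositions $L_1\cdots L_{a+b}$ with each $L_j\in\{S_g,T_g\}$, exactly $a$ of them equal to $S_g$ and $b$ equal to $T_g$ (so $W_g(0,0)=\{I\}$); $\operatorname{span}$ denotes the complex linear span. "$=$ on $\mathcal{H}_0(\mathbb{D})$"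 means equality of restrictions to $\mathcal{H}_0(\mathbb{D})$. *)

theory Defs
  imports "HOL-Complex_Analysis.Complex_Analysis"
begin

datatype gop = Mop | Sop | Top

definition Mg :: "(complex \<Rightarrow> complex) \<Rightarrow> (complex \<Rightarrow> complex) \<Rightarrow> complex \<Rightarrow> complex" where
  "Mg g f = (\<lambda>z. f z * g z)"

definition Sg :: "(complex \<Rightarrow> complex) \<Rightarrow> (complex \<Rightarrow> complex) \<Rightarrow> complex \<Rightarrow> complex" where
  "Sg g f = (\<lambda>z. contour_integral (linepath 0 z) (\<lambda>\<zeta>. deriv f \<zeta> * g \<zeta>))"

definition Tg :: "(complex \<Rightarrow> complex) \<Rightarrow> (complex \<Rightarrow> complex) \<Rightarrow> complex \<Rightarrow> complex" where
  "Tg g f = (\<lambda>z. contour_integral (linepath 0 z) (\<lambda>\<zeta>. f \<zeta> * deriv g \<zeta>))"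

fun op_eval :: "gop \<Rightarrow> (complex \<Rightarrow> complex) \<Rightarrow> (complex \<Rightarrow> complex) \<Rightarrow> complex \<Rightarrow> complex" where
  "op_eval Mop g = Mg g"
| "op_eval Sop g = Sg g"
| "op_eval Top g = Tg g"

text \<open>A word [L1,...,Lk] denotes the composition L1 \<circ> ... \<circ> Lk; the empty word is the identity.\<close>
definition word_eval :: "gop list \<Rightarrow> (complex \<Rightarrow> complex) \<Rightarrow> (complex \<Rightarrow> complex) \<Rightarrow> complex \<Rightarrow> complex" where
  "word_eval w g = foldr (\<lambda>L acc. op_eval L g \<circ> acc) w id"

text \<open>A g-operator: finite linear combination (constant coefficients) of words.\<close>
definition gop_eval :: "(complex \<times> gop list) list \<Rightarrow> (complex \<Rightarrow> complex) \<Rightarrow> (complex \<Rightarrow> complex) \<Rightarrow> complex \<Rightarrow> complex" where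
  "gop_eval L g f = (\<lambda>z. (\<Sum>(c, w) \<leftarrow> L. c * word_eval w g f z))"

definition inW :: "gop list \<Rightarrow> nat \<Rightarrow> nat \<Rightarrow> bool" where
  "inW w a b \<longleftrightarrow> set w \<subseteq> {Sop, Top} \<and> length (filter ((=) Sop) w) = a \<and> length (filter ((=) Top) w) = b"

text \<open>An element of span W_g(a,b) with coefficient function c (a finite sum, as W(a,b) is finite).\<close>
definition span_eval :: "(gop list \<Rightarrow> complex) \<Rightarrow> nat \<Rightarrow> nat \<Rightarrow> (complex \<Rightarrow> complex) \<Rightarrow> (complex \<Rightarrow> complex) \<Rightarrow> complex \<Rightarrow> complex" where
  "span_eval c a b g f = (\<lambda>z. (\<Sum>w\<in>{w. inW w a b}. c w * word_eval w g f z))"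

definition eq_on_H0 :: "((complex \<Rightarrow> complex) \<Rightarrow> complex \<Rightarrow> complex) \<Rightarrow> ((complex \<Rightarrow> complex) \<Rightarrow> complex \<Rightarrow> complex) \<Rightarrow> bool" where
  "eq_on_H0 A B \<longleftrightarrow> (\<forall>f. f holomorphic_on ball 0 1 \<and> f 0 = 0 \<longrightarrow> (\<forall>z\<in>ball 0 1. A f z = B f z))"

end

theory Submission
  imports Defs
begin

abbreviation "B \<equiv> ball (0::complex) 1"

lemma prim:
  assumes h: "h holomorphic_on B" and z: "z \<in> B"
  shows "((\<lambda>z. contour_integral (linepath 0 z) h) has_field_derivative h z) (at z)"
proof -
  have "((\<lambda>z. contour_integral (linepath 0 z) h) has_field_derivative h z) (at z within B)"
  proof (rule triangle_contour_integrals_convex_primitive)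
    show "continuous_on B h" using h holomorphic_on_imp_continuous_on by blast
    show "0 \<in> B" by simp
    show "convex B" by simp
    show "z \<in> B" by fact
    fix b c assume b: "b \<in> B" and c: "c \<in> B"
    have "(h has_contour_integral 0) (linepath 0 b +++ linepath b c +++ linepath c 0)"
    proof (rule Cauchy_theorem_convex_simple[OF h])
      have "path_image (linepath 0 b +++ linepath b c +++ linepath c 0) \<subseteq> B"
        using b c by (simp add: path_image_join closed_segment_subset convex_ball)
      then show "path_image (linepath 0 b +++ linepath b c +++ linepath c 0) \<subseteq> B" .
    qed auto
    then show "contour_integral (linepath 0 b) h + contour_integral (linepath b c) h + contour_integral (linepath c 0) h = 0"
      by (rule has_chain_integral_chain_integral3)
  qed
  then show ?thesis by (simp only: at_within_open[OF z open_ball])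
qed

lemma uniq:
  assumes "\<And>z. z \<in> B \<Longrightarrow> (F has_field_derivative D z) (at z)"
    and "\<And>z. z \<in> B \<Longrightarrow> (G has_field_derivative D z) (at z)"
    and "F 0 = G 0" and z: "z \<in> B"
  shows "F z = G z"
proof -
  have "\<exists>c. \<forall>x\<in>B. (\<lambda>x. F x - G x) x = c"
    apply (rule has_field_derivative_zero_constant)
     apply simp
    using assms(1,2) by (metis DERIV_diff diff_self has_field_derivative_at_within)
  then obtain c where "\<forall>x\<in>B. F x - G x = c" by auto
  moreover have "(0::complex) \<in> B" by simp
  ultimately have "F z - G z = F 0 - G 0" using z by metis
  then show ?thesis using assms(3) by simp
qed


lemma holo_deriv_at:
  assumes "f holomorphic_on B" "z \<in> B"
  shows "(f has_field_derivative deriv f z) (at z)"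
  using assms by (metis DERIV_deriv_iff_field_differentiable holomorphic_on_imp_differentiable_at open_ball)

lemma S_deriv:
  assumes g: "g holomorphic_on B" and f: "f holomorphic_on B" and z: "z \<in> B"
  shows "(Sg g f has_field_derivative deriv f z * g z) (at z)"
proof -
  have "(\<lambda>\<zeta>. deriv f \<zeta> * g \<zeta>) holomorphic_on B"
    by (intro holomorphic_on_mult holomorphic_deriv f g) simp
  from prim[OF this z] show ?thesis unfolding Sg_def by simp
qed

lemma T_deriv:
  assumes g: "g holomorphic_on B" and f: "f holomorphic_on B" and z: "z \<in> B"
  shows "(Tg g f has_field_derivative f z * deriv g z) (at z)"
proof -
  have "(\<lambda>\<zeta>. f \<zeta> * deriv g \<zeta>) holomorphic_on B"
    by (intro holomorphic_on_mult holomorphic_deriv f g) simp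
  from prim[OF this z] show ?thesis unfolding Tg_def by simp
qed

lemma S0 [simp]: "Sg g f 0 = 0" unfolding Sg_def by simp
lemma T0 [simp]: "Tg g f 0 = 0" unfolding Tg_def by simp

lemma deriv_holo: "(\<And>z. z \<in> B \<Longrightarrow> (F has_field_derivative D z) (at z)) \<Longrightarrow> F holomorphic_on B"
  by (simp only: holomorphic_on_open[OF open_ball]) blast

lemma S_holo: "g holomorphic_on B \<Longrightarrow> f holomorphic_on B \<Longrightarrow> Sg g f holomorphic_on B"
  by (rule deriv_holo, rule S_deriv)
lemma T_holo: "g holomorphic_on B \<Longrightarrow> f holomorphic_on B \<Longrightarrow> Tg g f holomorphic_on B"
  by (rule deriv_holo, rule T_deriv)

lemma seg_sub: "z \<in> B \<Longrightarrow> closed_segment 0 z \<subseteq> B"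
  by (simp add: closed_segment_subset)

lemma S_cong:
  assumes "\<And>z. z \<in> B \<Longrightarrow> f z = h z" and z: "z \<in> B"
  shows "Sg g f z = Sg g h z"
  unfolding Sg_def
proof (rule contour_integral_eq)
  fix x assume "x \<in> path_image (linepath 0 z)"
  then have x: "x \<in> B" using seg_sub[OF z] by auto
  have "eventually (\<lambda>y. f y = h y) (nhds x)"
    using eventually_nhds_in_open[OF open_ball x] by (rule eventually_mono) (use assms in auto)
  then show "deriv f x * g x = deriv h x * g x" using deriv_cong_ev by metis
qed

lemma T_cong:
  assumes "\<And>z. z \<in> B \<Longrightarrow> f z = h z" and z: "z \<in> B"
  shows "Tg g f z = Tg g h z"
  unfolding Tg_def
proof (rule contour_integral_eq)
  fix x assume "x \<in> path_image (linepath 0 z)"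
  then have x: "x \<in> B" using seg_sub[OF z] by auto
  then show "f x * deriv g x = h x * deriv g x" using assms by simp
qed

lemma lin_deriv:
  assumes f: "f holomorphic_on B" and h: "h holomorphic_on B" and z: "z \<in> B"
  shows "deriv (\<lambda>z. c * f z + h z) z = c * deriv f z + deriv h z"
  by (intro DERIV_imp_deriv DERIV_add[OF DERIV_cmult[OF holo_deriv_at[OF f z]] holo_deriv_at[OF h z]])

lemma S_lin:
  assumes g: "g holomorphic_on B" and f: "f holomorphic_on B" and h: "h holomorphic_on B" and z: "z \<in> B"
  shows "Sg g (\<lambda>z. c * f z + h z) z = c * Sg g f z + Sg g h z"
proof (rule uniq[OF _ _ _ z])
  have fh: "(\<lambda>z. c * f z + h z) holomorphic_on B" by (intro holomorphic_intros f h)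
  fix y assume y: "y \<in> B"
  show "(Sg g (\<lambda>z. c * f z + h z) has_field_derivative (c * deriv f y + deriv h y) * g y) (at y)"
    using S_deriv[OF g fh y] lin_deriv[OF f h y] by simp
  show "((\<lambda>z. c * Sg g f z + Sg g h z) has_field_derivative (c * deriv f y + deriv h y) * g y) (at y)"
    using DERIV_add[OF DERIV_cmult[OF S_deriv[OF g f y]] S_deriv[OF g h y], of c]
    by (simp add: algebra_simps)
qed simp

lemma T_lin:
  assumes g: "g holomorphic_on B" and f: "f holomorphic_on B" and h: "h holomorphic_on B" and z: "z \<in> B"
  shows "Tg g (\<lambda>z. c * f z + h z) z = c * Tg g f z + Tg g h z"
proof (rule uniq[OF _ _ _ z])
  have fh: "(\<lambda>z. c * f z + h z) holomorphic_on B" by (intro holomorphic_intros f h)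
  fix y assume y: "y \<in> B"
  show "(Tg g (\<lambda>z. c * f z + h z) has_field_derivative (c * f y + h y) * deriv g y) (at y)"
    using T_deriv[OF g fh y] by simp
  show "((\<lambda>z. c * Tg g f z + Tg g h z) has_field_derivative (c * f y + h y) * deriv g y) (at y)"
    using DERIV_add[OF DERIV_cmult[OF T_deriv[OF g f y]] T_deriv[OF g h y], of c]
    by (simp add: algebra_simps)
qed simp

lemma S_zero: "Sg g (\<lambda>z. 0) z = 0" unfolding Sg_def by simp
lemma T_zero: "Tg g (\<lambda>z. 0) z = 0" unfolding Tg_def by simp

lemma ST_sum:
  assumes g: "g holomorphic_on B" and f: "f holomorphic_on B" and f0: "f 0 = 0" and z: "z \<in> B"
  shows "Sg g f z + Tg g f z = f z * g z"
proof (rule uniq[OF _ _ _ z])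
  fix y assume y: "y \<in> B"
  show "((\<lambda>z. Sg g f z + Tg g f z) has_field_derivative deriv f y * g y + f y * deriv g y) (at y)"
    by (intro DERIV_add S_deriv T_deriv g f y)
  show "((\<lambda>z. f z * g z) has_field_derivative deriv f y * g y + f y * deriv g y) (at y)"
    using DERIV_mult[OF holo_deriv_at[OF f y] holo_deriv_at[OF g y]] by (simp add: algebra_simps)
qed (simp add: f0)

lemma commute:
  assumes g: "g holomorphic_on B" and f: "f holomorphic_on B" and f0: "f 0 = 0" and z: "z \<in> B"
  shows "Tg g (Sg g f) z = Sg g (Tg g f) z - Tg g (Tg g f) z"
proof (rule uniq[OF _ _ _ z])
  fix y assume y: "y \<in> B"
  have Sf: "Sg g f holomorphic_on B" and Tf: "Tg g f holomorphic_on B" using S_holo T_holo g f by auto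
  show "(Tg g (Sg g f) has_field_derivative Sg g f y * deriv g y) (at y)"
    by (rule T_deriv[OF g Sf y])
  have dT: "deriv (Tg g f) y = f y * deriv g y" by (rule DERIV_imp_deriv[OF T_deriv[OF g f y]])
  have "((\<lambda>z. Sg g (Tg g f) z - Tg g (Tg g f) z) has_field_derivative
      deriv (Tg g f) y * g y - Tg g f y * deriv g y) (at y)"
    by (intro DERIV_diff S_deriv T_deriv g Tf y)
  moreover have "deriv (Tg g f) y * g y - Tg g f y * deriv g y = Sg g f y * deriv g y"
  proof -
    have "Sg g f y = f y * g y - Tg g f y" using ST_sum[OF g f f0 y] by (simp add: eq_diff_eq)
    then show ?thesis by (simp only: dT) (simp add: algebra_simps)
  qed
  ultimately show "((\<lambda>z. Sg g (Tg g f) z - Tg g (Tg g f) z) has_field_derivative Sg g f y * deriv g y) (at y)"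
    by simp
qed simp


lemma op_holo: "x \<in> {Sop, Top} \<Longrightarrow> g holomorphic_on B \<Longrightarrow> f holomorphic_on B \<Longrightarrow> op_eval x g f holomorphic_on B"
  by (cases x) (simp_all add: S_holo T_holo)
lemma op_0: "x \<in> {Sop, Top} \<Longrightarrow> op_eval x g f 0 = 0"
  by (cases x) simp_all
lemma op_cong:
  assumes "x \<in> {Sop, Top}" "\<And>z. z \<in> B \<Longrightarrow> f z = h z" "z \<in> B"
  shows "op_eval x g f z = op_eval x g h z"
  using assms(1) S_cong[of f h z g, OF assms(2,3)] T_cong[of f h z g, OF assms(2,3)] by (cases x) simp_all
lemma op_lin:
  assumes "x \<in> {Sop, Top}" "g holomorphic_on B" "f holomorphic_on B" "h holomorphic_on B" "z \<in> B"
  shows "op_eval x g (\<lambda>z. c * f z + h z) z = c * op_eval x g f z + op_eval x g h z"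
  using assms(1) by (cases x) (simp_all only: op_eval.simps S_lin[OF assms(2-5)] T_lin[OF assms(2-5)], simp)
lemma op_zero: "x \<in> {Sop, Top} \<Longrightarrow> op_eval x g (\<lambda>z. 0) z = 0"
  by (cases x) (simp_all add: S_zero T_zero)
lemma op_diff:
  assumes "x \<in> {Sop, Top}" "g holomorphic_on B" "f holomorphic_on B" "h holomorphic_on B" "z \<in> B"
  shows "op_eval x g (\<lambda>z. f z - h z) z = op_eval x g f z - op_eval x g h z"
proof -
  have "(\<lambda>z. f z - h z) = (\<lambda>z. (-1) * h z + f z)" by auto
  then show ?thesis using op_lin[OF assms(1,2,4,3,5), of "-1"] by simp
qed

lemma word_eval_Nil [simp]: "word_eval [] g f = f"
  by (simp add: word_eval_def)
lemma word_eval_Cons [simp]: "word_eval (x # w) g f = op_eval x g (word_eval w g f)"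
  by (simp add: word_eval_def)
lemma word_eval_append [simp]: "word_eval (xs @ ys) g f = word_eval xs g (word_eval ys g f)"
  by (induction xs) auto

lemma word_good:
  assumes "set w \<subseteq> {Sop, Top}" "g holomorphic_on B" "f holomorphic_on B" "f 0 = 0"
  shows "word_eval w g f holomorphic_on B \<and> word_eval w g f 0 = 0"
  using assms(1)
proof (induction w)
  case Nil then show ?case using assms by simp
next
  case (Cons x w)
  then have x: "x \<in> {Sop, Top}" by auto
  from Cons have "word_eval w g f holomorphic_on B" by simp
  then show ?case using op_holo[OF x assms(2)] op_0[OF x] by simp
qed

definition opeq :: "((complex \<Rightarrow> complex) \<Rightarrow> (complex \<Rightarrow> complex) \<Rightarrow> complex \<Rightarrow> complex) \<Rightarrow>
   ((complex \<Rightarrow> complex) \<Rightarrow> (complex \<Rightarrow> complex) \<Rightarrow> complex \<Rightarrow> complex) \<Rightarrow> bool" where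
  "opeq P Q \<longleftrightarrow> (\<forall>g f z. g holomorphic_on B \<longrightarrow> f holomorphic_on B \<longrightarrow> f 0 = 0 \<longrightarrow> z \<in> B \<longrightarrow> P g f z = Q g f z)"

lemma opeqI: "(\<And>g f z. g holomorphic_on B \<Longrightarrow> f holomorphic_on B \<Longrightarrow> f 0 = 0 \<Longrightarrow> z \<in> B \<Longrightarrow> P g f z = Q g f z) \<Longrightarrow> opeq P Q"
  by (simp add: opeq_def)
lemma opeqD: "opeq P Q \<Longrightarrow> g holomorphic_on B \<Longrightarrow> f holomorphic_on B \<Longrightarrow> f 0 = 0 \<Longrightarrow> z \<in> B \<Longrightarrow> P g f z = Q g f z"
  by (simp add: opeq_def)

inductive inspan :: "nat \<Rightarrow> nat \<Rightarrow> ((complex \<Rightarrow> complex) \<Rightarrow> (complex \<Rightarrow> complex) \<Rightarrow> complex \<Rightarrow> complex) \<Rightarrow> bool"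
  for a b where
  zero: "inspan a b (\<lambda>g f z. 0)"
| word: "inW w a b \<Longrightarrow> inspan a b (word_eval w)"
| lin: "inspan a b P \<Longrightarrow> inspan a b Q \<Longrightarrow> inspan a b (\<lambda>g f z. c * P g f z + Q g f z)"
| cong: "inspan a b Q \<Longrightarrow> opeq P Q \<Longrightarrow> inspan a b P"

lemma inW_set: "inW w a b \<Longrightarrow> set w \<subseteq> {Sop, Top}"
  by (simp add: inW_def)

lemma inspan_good:
  assumes "inspan a b P" "g holomorphic_on B" "f holomorphic_on B" "f 0 = 0"
  shows "P g f holomorphic_on B \<and> P g f 0 = 0"
  using assms(1)
proof (induction rule: inspan.induct)
  case zero then show ?case by simp
next
  case (word w) then show ?case using word_good[OF inW_set assms(2-4)] by blast
next
  case (lin P Q c) then show ?case by (auto intro!: holomorphic_intros)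
next
  case (cong Q P)
  have "\<forall>z\<in>B. Q g f z = P g f z" using opeqD[OF cong(2) assms(2-4)] by auto
  moreover have "(0::complex) \<in> B" by simp
  ultimately show ?case using cong(3) holomorphic_transform[of "Q g f" B "P g f"] by auto
qed

lemma inspan_op:
  assumes "inspan a b P" "x \<in> {Sop, Top}"
  shows "inspan (if x = Sop then Suc a else a) (if x = Top then Suc b else b) (\<lambda>g f. op_eval x g (P g f))"
  using assms(1)
proof (induction rule: inspan.induct)
  case zero
  show ?case by (rule inspan.cong[OF inspan.zero]) (auto intro!: opeqI op_zero[OF assms(2)])
next
  case (word w)
  have "inW (x # w) (if x = Sop then Suc a else a) (if x = Top then Suc b else b)"
    using word assms(2) by (auto simp: inW_def)
  moreover have e: "(\<lambda>g f. op_eval x g (word_eval w g f)) = word_eval (x # w)" by (intro ext) simp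
  ultimately show ?case using inspan.word by metis
next
  case (lin P Q c)
  show ?case
  proof (rule inspan.cong[OF inspan.lin[OF lin(3,4), of c]], rule opeqI)
    fix g f z assume h: "g holomorphic_on B" "f holomorphic_on B" "f 0 = 0" "z \<in> B"
    show "op_eval x g (\<lambda>z. c * P g f z + Q g f z) z = c * op_eval x g (P g f) z + op_eval x g (Q g f) z"
      using op_lin[OF assms(2) h(1) conjunct1[OF inspan_good[OF lin(1) h(1-3)]] conjunct1[OF inspan_good[OF lin(2) h(1-3)]] h(4)] .
  qed
next
  case (cong Q P)
  show ?case
  proof (rule inspan.cong[OF cong(3)], rule opeqI)
    fix g f z assume h: "g holomorphic_on B" "f holomorphic_on B" "f 0 = 0" "z \<in> B"
    show "op_eval x g (P g f) z = op_eval x g (Q g f) z"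
      by (rule op_cong[OF assms(2) _ h(4)]) (use opeqD[OF cong(2) h(1-3)] in auto)
  qed
qed

lemma inspan_S: "inspan a b P \<Longrightarrow> inspan (Suc a) b (\<lambda>g f. Sg g (P g f))"
  using inspan_op[of a b P Sop] by simp
lemma inspan_T: "inspan a b P \<Longrightarrow> inspan a (Suc b) (\<lambda>g f. Tg g (P g f))"
  using inspan_op[of a b P Top] by simp

lemma inspan_cong_eq: "inspan a b Q \<Longrightarrow> (\<And>g f z. g holomorphic_on B \<Longrightarrow> f holomorphic_on B \<Longrightarrow> f 0 = 0 \<Longrightarrow> z \<in> B \<Longrightarrow> P g f z = Q g f z) \<Longrightarrow> inspan a b P"
  by (rule inspan.cong) (auto intro: opeqI)

lemma inspan_add: "inspan a b P \<Longrightarrow> inspan a b Q \<Longrightarrow> inspan a b (\<lambda>g f z. P g f z + Q g f z)"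
  by (rule inspan_cong_eq[OF inspan.lin[of a b P Q 1]]) auto
lemma inspan_scale: assumes "inspan a b P" shows "inspan a b (\<lambda>g f z. c * P g f z)"
  by (rule inspan_cong_eq[OF inspan.lin[OF assms inspan.zero, where c=c]]) simp


lemma W0: assumes "inW w 0 b" shows "w = replicate b Top"
proof -
  have st: "set w \<subseteq> {Sop, Top}" and s0: "length (filter ((=) Sop) w) = 0" and tb: "length (filter ((=) Top) w) = b"
    using assms by (auto simp: inW_def)
  from s0 have "Sop \<notin> set w" by (auto simp add: filter_empty_conv)
  with st have all: "\<forall>y\<in>set w. y = Top" by auto
  then have "filter ((=) Top) w = w" by (auto simp add: filter_id_conv)
  with tb have "length w = b" by simp
  with all show ?thesis using replicate_length_same[of w Top] by simp
qed

lemma inW_rep: "inW (replicate a Sop @ replicate b Top) a b"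
  by (auto simp: inW_def filter_replicate set_replicate_conv_if)

lemma word_goodW: "inW w a b \<Longrightarrow> g holomorphic_on B \<Longrightarrow> f holomorphic_on B \<Longrightarrow> f 0 = 0 \<Longrightarrow>
   word_eval w g f holomorphic_on B \<and> word_eval w g f 0 = 0"
  using word_good inW_set by blast

lemma inW_app: "inW (u @ v) (a1 + a2) (b1 + b2)" if "inW u a1 b1" "inW v a2 b2"
  using that by (simp add: inW_def)

lemma commute_word:
  assumes u: "inW u p q"
  shows "inspan (a + p) (Suc (Suc q))
     (\<lambda>g f z. word_eval (Top # replicate (Suc a) Sop @ u) g f z - word_eval (replicate (Suc a) Sop @ Top # u) g f z)"
proof (induction a)
  case 0
  have w: "inW (Top # Top # u) p (Suc (Suc q))" using u by (simp add: inW_def)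
  show ?case unfolding add_0
  proof (rule inspan_cong_eq[OF inspan_scale[OF inspan.word[OF w], of "-1"]])
    fix g f z assume h: "g holomorphic_on B" "f holomorphic_on B" "f 0 = (0::complex)" "z \<in> B"
    note uu = word_goodW[OF u h(1-3)]
    show "word_eval (Top # replicate (Suc 0) Sop @ u) g f z - word_eval (replicate (Suc 0) Sop @ Top # u) g f z =
          -1 * word_eval (Top # Top # u) g f z"
      using commute[OF h(1) conjunct1[OF uu] conjunct2[OF uu] h(4)] by simp
  qed
next
  case (Suc a)
  have w: "inW (Top # Top # replicate (Suc a) Sop @ u) (Suc (a + p)) (Suc (Suc q))"
    using u by (auto simp: inW_def filter_replicate set_replicate_conv_if)
  show ?case unfolding add_Suc
  proof (rule inspan_cong_eq[OF inspan_add[OF inspan_scale[OF inspan.word[OF w], of "-1"] inspan_S[OF Suc.IH]]])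
    fix g f z assume h: "g holomorphic_on B" "f holomorphic_on B" "f 0 = (0::complex)" "z \<in> B"
    have wv: "inW (replicate (Suc a) Sop @ u) (Suc a + p) q" using u by (auto simp: inW_def filter_replicate set_replicate_conv_if)
    have wv2: "inW (Top # replicate (Suc a) Sop @ u) (Suc a + p) (Suc q)" using u by (auto simp: inW_def filter_replicate set_replicate_conv_if)
    have wv3: "inW (replicate (Suc a) Sop @ Top # u) (Suc a + p) (Suc q)" using u by (auto simp: inW_def filter_replicate set_replicate_conv_if)
    define v where "v = word_eval (replicate (Suc a) Sop @ u) g f"
    have vv: "v holomorphic_on B" "v 0 = 0" using word_goodW[OF wv h(1-3)] v_def by auto
    have c: "Tg g (Sg g v) z = Sg g (Tg g v) z - Tg g (Tg g v) z" by (rule commute[OF h(1) vv h(4)])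
    have d: "Sg g (\<lambda>z. word_eval (Top # replicate (Suc a) Sop @ u) g f z - word_eval (replicate (Suc a) Sop @ Top # u) g f z) z
        = Sg g (word_eval (Top # replicate (Suc a) Sop @ u) g f) z - Sg g (word_eval (replicate (Suc a) Sop @ Top # u) g f) z"
      using op_diff[of Sop g "word_eval (Top # replicate (Suc a) Sop @ u) g f" "word_eval (replicate (Suc a) Sop @ Top # u) g f" z]
        word_goodW[OF wv2 h(1-3)] word_goodW[OF wv3 h(1-3)] h by simp
    have e1: "word_eval (Top # replicate (Suc (Suc a)) Sop @ u) g f z = Tg g (Sg g v) z"
      by (simp add: v_def)
    have e2: "word_eval (replicate (Suc (Suc a)) Sop @ Top # u) g f z = Sg g (word_eval (replicate (Suc a) Sop @ Top # u) g f) z"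
      by simp
    have e3: "Sg g (word_eval (Top # replicate (Suc a) Sop @ u) g f) z = Sg g (Tg g v) z"
      by (simp add: v_def)
    have e4: "word_eval (Top # Top # replicate (Suc a) Sop @ u) g f z = Tg g (Tg g v) z"
      by (simp add: v_def)
    show "word_eval (Top # replicate (Suc (Suc a)) Sop @ u) g f z - word_eval (replicate (Suc (Suc a)) Sop @ Top # u) g f z =
      -1 * word_eval (Top # Top # replicate (Suc a) Sop @ u) g f z +
      Sg g (\<lambda>z. word_eval (Top # replicate (Suc a) Sop @ u) g f z - word_eval (replicate (Suc a) Sop @ Top # u) g f z) z"
      unfolding d e1 e2 e3 e4 c by simp
  qed
qed


lemma sort_word:
  "inW w (Suc a) b \<Longrightarrow> inspan a (Suc b)
     (\<lambda>g f z. word_eval w g f z - word_eval (replicate (Suc a) Sop @ replicate b Top) g f z)"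
proof (induction w arbitrary: a b)
  case Nil then show ?case by (simp add: inW_def)
next
  case (Cons x w)
  have x: "x = Sop \<or> x = Top" using Cons.prems by (auto simp: inW_def)
  then show ?case
  proof
    assume xs: "x = Sop"
    then have ww: "inW w a b" using Cons.prems by (auto simp: inW_def)
    show ?case
    proof (cases a)
      case 0
      then have "w = replicate b Top" using W0 ww by simp
      then show ?thesis using xs 0 by (intro inspan_cong_eq[OF inspan.zero]) simp
    next
      case (Suc a')
      have IH: "inspan a' (Suc b) (\<lambda>g f z. word_eval w g f z - word_eval (replicate (Suc a') Sop @ replicate b Top) g f z)"
        using Cons.IH ww Suc by simp
      show ?thesis unfolding Suc
      proof (rule inspan_cong_eq[OF inspan_S[OF IH]])
        fix g f z assume h: "g holomorphic_on B" "f holomorphic_on B" "f 0 = (0::complex)" "z \<in> B"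
        have r: "inW (replicate (Suc a') Sop @ replicate b Top) (Suc a') b" by (rule inW_rep)
        have w': "inW w (Suc a') b" using ww Suc by simp
        show "word_eval (x # w) g f z - word_eval (replicate (Suc (Suc a')) Sop @ replicate b Top) g f z =
          Sg g (\<lambda>z. word_eval w g f z - word_eval (replicate (Suc a') Sop @ replicate b Top) g f z) z"
          using op_diff[of Sop g "word_eval w g f" "word_eval (replicate (Suc a') Sop @ replicate b Top) g f" z]
            word_goodW[OF w' h(1-3)] word_goodW[OF r h(1-3)] h xs by simp
      qed
    qed
  next
    assume xt: "x = Top"
    then obtain b' where b: "b = Suc b'" using Cons.prems
      by (cases b) (auto simp: inW_def)
    have ww: "inW w (Suc a) b'" using Cons.prems xt b by (auto simp: inW_def)
    have IH: "inspan a (Suc b') (\<lambda>g f z. word_eval w g f z - word_eval (replicate (Suc a) Sop @ replicate b' Top) g f z)"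
      using Cons.IH ww by simp
    have u: "inW (replicate b' Top) 0 b'" by (auto simp: inW_def filter_replicate set_replicate_conv_if)
    have C: "inspan a (Suc (Suc b'))
     (\<lambda>g f z. word_eval (Top # replicate (Suc a) Sop @ replicate b' Top) g f z - word_eval (replicate (Suc a) Sop @ Top # replicate b' Top) g f z)"
      using commute_word[OF u, of a] by simp
    show ?case unfolding b
    proof (rule inspan_cong_eq[OF inspan_add[OF inspan_T[OF IH] C]])
      fix g f z assume h: "g holomorphic_on B" "f holomorphic_on B" "f 0 = (0::complex)" "z \<in> B"
      have r: "inW (replicate (Suc a) Sop @ replicate b' Top) (Suc a) b'" by (rule inW_rep)
      show "word_eval (x # w) g f z - word_eval (replicate (Suc a) Sop @ replicate (Suc b') Top) g f z =
        Tg g (\<lambda>z. word_eval w g f z - word_eval (replicate (Suc a) Sop @ replicate b' Top) g f z) z +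
        (word_eval (Top # replicate (Suc a) Sop @ replicate b' Top) g f z - word_eval (replicate (Suc a) Sop @ Top # replicate b' Top) g f z)"
        using op_diff[of Top g "word_eval w g f" "word_eval (replicate (Suc a) Sop @ replicate b' Top) g f" z]
            word_goodW[OF ww h(1-3)] word_goodW[OF r h(1-3)] h xt by simp
    qed
  qed
qed


definition U :: "nat \<Rightarrow> (nat \<Rightarrow> gop list) \<Rightarrow> nat \<Rightarrow> ((complex \<Rightarrow> complex) \<Rightarrow> (complex \<Rightarrow> complex) \<Rightarrow> complex \<Rightarrow> complex) \<Rightarrow> bool" where
  "U m LL k P \<longleftrightarrow> (\<exists>d. (\<forall>i<k. d i = 0) \<and> opeq P (\<lambda>g f z. \<Sum>i\<le>m. d i * word_eval (LL i) g f z))"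

lemma U_zero: "U m LL k (\<lambda>g f z. 0)"
  unfolding U_def by (rule exI[of _ "\<lambda>i. 0"]) (simp add: opeq_def)

lemma U_lin:
  assumes "U m LL k P" "U m LL k Q"
  shows "U m LL k (\<lambda>g f z. c * P g f z + Q g f z)"
proof -
  obtain d1 where d1: "\<forall>i<k. d1 i = 0" "opeq P (\<lambda>g f z. \<Sum>i\<le>m. d1 i * word_eval (LL i) g f z)"
    using assms(1) unfolding U_def by blast
  obtain d2 where d2: "\<forall>i<k. d2 i = 0" "opeq Q (\<lambda>g f z. \<Sum>i\<le>m. d2 i * word_eval (LL i) g f z)"
    using assms(2) unfolding U_def by blast
  show ?thesis unfolding U_def
  proof (intro exI[of _ "\<lambda>i. c * d1 i + d2 i"] conjI)
    show "\<forall>i<k. c * d1 i + d2 i = 0" using d1(1) d2(1) by simp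
    show "opeq (\<lambda>g f z. c * P g f z + Q g f z) (\<lambda>g f z. \<Sum>i\<le>m. (c * d1 i + d2 i) * word_eval (LL i) g f z)"
    proof (rule opeqI)
      fix g f z assume h: "g holomorphic_on B" "f holomorphic_on B" "f 0 = (0::complex)" "z \<in> B"
      show "c * P g f z + Q g f z = (\<Sum>i\<le>m. (c * d1 i + d2 i) * word_eval (LL i) g f z)"
        using opeqD[OF d1(2) h] opeqD[OF d2(2) h]
        by (simp add: distrib_right sum.distrib sum_distrib_left mult.assoc)
    qed
  qed
qed

lemma U_cong: assumes "U m LL k Q" "opeq P Q" shows "U m LL k P"
proof -
  obtain d where d: "\<forall>i<k. d i = 0" "opeq Q (\<lambda>g f z. \<Sum>i\<le>m. d i * word_eval (LL i) g f z)"
    using assms(1) unfolding U_def by blast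
  have "opeq P (\<lambda>g f z. \<Sum>i\<le>m. d i * word_eval (LL i) g f z)"
    using d(2) assms(2) unfolding opeq_def by simp
  then show ?thesis using d(1) unfolding U_def by blast
qed

lemma U_cong_eq: "U m LL k Q \<Longrightarrow> (\<And>g f z. g holomorphic_on B \<Longrightarrow> f holomorphic_on B \<Longrightarrow> f 0 = 0 \<Longrightarrow> z \<in> B \<Longrightarrow> P g f z = Q g f z) \<Longrightarrow> U m LL k P"
  by (rule U_cong) (auto intro: opeqI)

lemma U_mono: "U m LL k P \<Longrightarrow> k' \<le> k \<Longrightarrow> U m LL k' P"
  unfolding U_def using order.strict_trans2 by blast

lemma U_LL: assumes "j \<le> m" shows "U m LL j (word_eval (LL j))"
  unfolding U_def
proof (intro exI[of _ "\<lambda>i. if i = j then 1 else 0"] conjI)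
  show "\<forall>i<j. (if i = j then 1 else 0) = (0::complex)" by simp
  show "opeq (word_eval (LL j)) (\<lambda>g f z. \<Sum>i\<le>m. (if i = j then 1 else 0) * word_eval (LL i) g f z)"
  proof (rule opeqI)
    fix g f z
    have "(\<Sum>i\<le>m. (if i = j then 1 else 0) * word_eval (LL i) g f z) = (\<Sum>i\<le>m. if i = j then word_eval (LL i) g f z else 0)"
      by (rule sum.cong) auto
    also have "\<dots> = word_eval (LL j) g f z" using assms by simp
    finally show "word_eval (LL j) g f z = (\<Sum>i\<le>m. (if i = j then 1 else 0) * word_eval (LL i) g f z)" by simp
  qed
qed

lemma U_add: "U m LL k P \<Longrightarrow> U m LL k Q \<Longrightarrow> U m LL k (\<lambda>g f z. P g f z + Q g f z)"
  using U_lin[of m LL k P Q 1] by simp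

lemma U_sum: "finite J \<Longrightarrow> (\<forall>j\<in>J. U m LL k (P j)) \<Longrightarrow> U m LL k (\<lambda>g f z. \<Sum>j\<in>J. P j g f z)"
proof (induction J rule: finite_induct)
  case empty then show ?case using U_zero by simp
next
  case (insert x F)
  then show ?case using U_add[of m LL k "P x" "\<lambda>g f z. \<Sum>j\<in>F. P j g f z"] by simp
qed

lemma inspan_U:
  assumes P: "inspan a b P" and W: "\<And>w. inW w a b \<Longrightarrow> U m LL k (word_eval w)"
  shows "U m LL k P"
  using P
proof (induction rule: inspan.induct)
  case zero then show ?case by (rule U_zero)
next
  case (word w) then show ?case by (rule W)
next
  case (lin P Q c) then show ?case by (intro U_lin)
next
  case (cong Q P) then show ?case by (intro U_cong[of m LL k Q P])
qed

lemma main_claim: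
  fixes m n :: nat and LL :: "nat \<Rightarrow> gop list"
  assumes LLW: "\<forall>j\<le>m. inW (LL j) (m - j) (n + j)"
  shows "\<forall>j\<le>m. (\<forall>w. inW w (m - j) (n + j) \<longrightarrow> U m LL (Suc j) (\<lambda>g f z. word_eval w g f z - word_eval (LL j) g f z))"
proof -
  have B: "U m LL j P"
    if A: "\<forall>w. inW w (m - j) (n + j) \<longrightarrow> U m LL (Suc j) (\<lambda>g f z. word_eval w g f z - word_eval (LL j) g f z)"
      and j: "j \<le> m" and P: "inspan (m - j) (n + j) P" for j P
  proof (rule inspan_U[OF P])
    fix w assume w: "inW w (m - j) (n + j)"
    have "U m LL j (\<lambda>g f z. (word_eval w g f z - word_eval (LL j) g f z) + word_eval (LL j) g f z)"
      by (rule U_add[OF U_mono[OF A[rule_format, OF w]] U_LL[OF j]]) simp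
    then show "U m LL j (word_eval w)" by (rule U_cong_eq) simp
  qed
  have K: "\<forall>w. inW w (m - (m - k)) (n + (m - k)) \<longrightarrow> U m LL (Suc (m - k)) (\<lambda>g f z. word_eval w g f z - word_eval (LL (m - k)) g f z)"
    if "k \<le> m" for k
    using that
  proof (induction k)
    case 0
    show ?case
    proof (intro allI impI)
      fix w assume w: "inW w (m - (m - 0)) (n + (m - 0))"
      have "w = replicate (n + m) Top" using W0 w by simp
      moreover have "inW (LL m) 0 (n + m)" using LLW[rule_format, of m] by simp
      then have "LL m = replicate (n + m) Top" by (rule W0)
      ultimately show "U m LL (Suc (m - 0)) (\<lambda>g f z. word_eval w g f z - word_eval (LL (m - 0)) g f z)"
        using U_zero by simp
    qed
  next
    case (Suc k)
    define j where "j = m - Suc k"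
    have km: "k < m" using Suc.prems by simp
    have j1: "m - k = Suc j" using km j_def by simp
    have mj: "m - j = Suc k" using km j_def by simp
    have mj1: "m - Suc j = k" using j1 by simp
    have IH: "\<forall>w. inW w (m - Suc j) (n + Suc j) \<longrightarrow> U m LL (Suc (Suc j)) (\<lambda>g f z. word_eval w g f z - word_eval (LL (Suc j)) g f z)"
      using Suc.IH km j1 by simp
    have Bj: "U m LL (Suc j) P" if "inspan k (Suc (n + j)) P" for P
    proof -
      have "inspan (m - Suc j) (n + Suc j) P" using that mj1 by simp
      moreover have "Suc j \<le> m" using j1 km by simp
      ultimately show ?thesis using B[OF IH] by blast
    qed
    show ?case unfolding j_def[symmetric]
    proof (intro allI impI)
      fix w assume w: "inW w (m - j) (n + j)"
      let ?R = "replicate (Suc k) Sop @ replicate (n + j) Top"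
      have w1: "inW w (Suc k) (n + j)" using w mj by simp
      have U1: "U m LL (Suc j) (\<lambda>g f z. word_eval w g f z - word_eval ?R g f z)"
        by (rule Bj[OF sort_word[OF w1]])
      have "inW (LL j) (m - j) (n + j)" using LLW j_def by simp
      then have w2: "inW (LL j) (Suc k) (n + j)" unfolding mj .
      have U2: "U m LL (Suc j) (\<lambda>g f z. word_eval (LL j) g f z - word_eval ?R g f z)"
        by (rule Bj[OF sort_word[OF w2]])
      show "U m LL (Suc j) (\<lambda>g f z. word_eval w g f z - word_eval (LL j) g f z)"
        by (rule U_cong_eq[OF U_lin[OF U2 U1, of "-1"]]) simp
    qed
  qed
  show ?thesis
  proof (rule allI, rule impI)
    fix j assume j: "j \<le> m"
    have e: "m - (m - j) = j" using j by simp
    show "\<forall>w. inW w (m - j) (n + j) \<longrightarrow> U m LL (Suc j) (\<lambda>g f z. word_eval w g f z - word_eval (LL j) g f z)"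
      using K[of "m - j"] unfolding e by simp
  qed
qed

lemma length_ST: "set w \<subseteq> {Sop, Top} \<Longrightarrow> length w = length (filter ((=) Sop) w) + length (filter ((=) Top) w)"
  by (induction w) auto

lemma finite_W: "finite {w. inW w a b}"
proof (rule finite_subset)
  show "{w. inW w a b} \<subseteq> {w. set w \<subseteq> {Sop, Top} \<and> length w = a + b}"
    using length_ST by (auto simp: inW_def)
  show "finite {w. set w \<subseteq> {Sop, Top} \<and> length w = a + b}"
    by (rule finite_lists_length_eq) simp
qed

lemma inspan_sum: "finite A \<Longrightarrow> (\<forall>w\<in>A. inW w a b) \<Longrightarrow> inspan a b (\<lambda>g f z. \<Sum>w\<in>A. c w * word_eval w g f z)"
proof (induction A rule: finite_induct)
  case empty then show ?case using inspan.zero by simp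
next
  case (insert x F)
  then have "inspan a b (\<lambda>g f z. c x * word_eval x g f z + (\<Sum>w\<in>F. c w * word_eval w g f z))"
    by (intro inspan.lin inspan.word) auto
  then show ?case using insert by simp
qed

lemma inspan_span_eval: "inspan a b (span_eval c a b)"
proof -
  have "inspan a b (\<lambda>g f z. \<Sum>w\<in>{w. inW w a b}. c w * word_eval w g f z)"
    by (rule inspan_sum[OF finite_W]) simp
  moreover have "span_eval c a b = (\<lambda>g f z. \<Sum>w\<in>{w. inW w a b}. c w * word_eval w g f z)"
    by (intro ext) (simp add: span_eval_def)
  ultimately show ?thesis by simp
qed

theorem proposition2p1:
  fixes m n :: nat
    and LL :: "nat \<Rightarrow> gop list"
    and Lg :: "(complex \<times> gop list) list"
    and L0 :: "gop list"
    and c :: "nat \<Rightarrow> gop list \<Rightarrow> complex"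
  assumes "\<forall>j\<le>m. inW (LL j) (m - j) (n + j)"
    and "inW L0 m n"
    and "\<forall>g. g holomorphic_on ball 0 1 \<longrightarrow>
           eq_on_H0 (gop_eval Lg g)
             (\<lambda>f z. word_eval L0 g f z + (\<Sum>j=1..m. span_eval (c j) (m - j) (n + j) g f z))"
  shows "\<exists>a :: nat \<Rightarrow> complex. \<forall>g. g holomorphic_on ball 0 1 \<longrightarrow>
           eq_on_H0 (gop_eval Lg g)
             (\<lambda>f z. word_eval (LL 0) g f z + (\<Sum>j=1..m. a j * word_eval (LL j) g f z))"
proof -
  note MC = main_claim[OF assms(1)]
  have BU: "U m LL j P" if j: "j \<le> m" and P: "inspan (m - j) (n + j) P" for j P
  proof (rule inspan_U[OF P])
    fix w assume w: "inW w (m - j) (n + j)"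
    have "U m LL j (\<lambda>g f z. (word_eval w g f z - word_eval (LL j) g f z) + word_eval (LL j) g f z)"
      by (rule U_add[OF U_mono[OF MC[rule_format, OF j w]] U_LL[OF j]]) simp
    then show "U m LL j (word_eval w)" by (rule U_cong_eq) simp
  qed
  define Psi where "Psi = (\<lambda>g f z. (word_eval L0 g f z - word_eval (LL 0) g f z) +
      (\<Sum>j=1..m. span_eval (c j) (m - j) (n + j) g f z))"
  have U0: "U m LL 1 (\<lambda>g f z. word_eval L0 g f z - word_eval (LL 0) g f z)"
    using MC assms(2) by simp
  have Us: "U m LL 1 (\<lambda>g f z. \<Sum>j=1..m. span_eval (c j) (m - j) (n + j) g f z)"
  proof (rule U_sum)
    show "\<forall>j\<in>{1..m}. U m LL 1 (span_eval (c j) (m - j) (n + j))"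
    proof
      fix j assume j: "j \<in> {1..m}"
      have "U m LL j (span_eval (c j) (m - j) (n + j))"
        using BU[OF _ inspan_span_eval] j by simp
      then show "U m LL 1 (span_eval (c j) (m - j) (n + j))" using U_mono j by auto
    qed
  qed simp
  have "U m LL 1 Psi" unfolding Psi_def by (rule U_add[OF U0 Us])
  then obtain d where d0: "d 0 = 0" and dP: "opeq Psi (\<lambda>g f z. \<Sum>i\<le>m. d i * word_eval (LL i) g f z)"
    unfolding U_def by auto
  show ?thesis
  proof (intro exI[of _ d] allI impI)
    fix g :: "complex \<Rightarrow> complex" assume g: "g holomorphic_on ball 0 1"
    show "eq_on_H0 (gop_eval Lg g) (\<lambda>f z. word_eval (LL 0) g f z + (\<Sum>j=1..m. d j * word_eval (LL j) g f z))"
      unfolding eq_on_H0_def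
    proof (intro allI impI ballI)
      fix f z assume f: "f holomorphic_on ball 0 1 \<and> f 0 = 0" and z: "z \<in> ball (0::complex) 1"
      have "gop_eval Lg g f z = word_eval L0 g f z + (\<Sum>j=1..m. span_eval (c j) (m - j) (n + j) g f z)"
        using assms(3) g f z unfolding eq_on_H0_def by blast
      also have "\<dots> = word_eval (LL 0) g f z + Psi g f z" unfolding Psi_def by simp
      also have "Psi g f z = (\<Sum>i\<le>m. d i * word_eval (LL i) g f z)"
        using opeqD[OF dP g] f z by blast
      also have "\<dots> = (\<Sum>i=0..m. d i * word_eval (LL i) g f z)" by (simp add: atMost_atLeast0)
      also have "\<dots> = (\<Sum>j=1..m. d j * word_eval (LL j) g f z)"
        using sum.atLeast_Suc_atMost[of 0 m "\<lambda>i. d i * word_eval (LL i) g f z"] d0 by simp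
      finally show "gop_eval Lg g f z = word_eval (LL 0) g f z + (\<Sum>j=1..m. d j * word_eval (LL j) g f z)" .
    qed
  qed
qed

end
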